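(* Let $K$ be any field with involution, and let $T=L_K(E_T)$ be the Toeplitz algebra, where $E_T$ is the graph with two vertices $u,v$, one loop at $v$, and one edge from $v$ to $u$. Then $T$ is not $*$-symmetric, and for every integer $n>1$ the ring $\mathbb M_n(T)$ (a Rickart ring, being the Leavitt path algebra of a graph with finitely many vertices) is not a Rickart $*$-ring.
   Context: $L_K(E_T)$ is generated by $u,v,c,f,c^*,f^*$ ($c$ the loop at $v$, $f$ the edge $v\to u$) subject to the Leavitt path algebra relations: $u,v$ orthogonal idempotents; $vc=cv=c$, $vf=fu=f$; $c^*v=vc^*=c^*$, $uf^*=f^*v=f^*$; $c^*c=v$, $f^*f=u$, $c^*f=f^*c=0$; $v=cc^*+ff^*$. It has identity $u+v$ and the involution $(\sum k_ipq^* )^*=\sum k_i^*qp^*$. A unital $*$-ring is $*$-symmetric if $1+xx^*$ is invertible for all $x$. $\mathbb M_n(T)$ carries the $*$-transpose involution $(a_{ij})^*=(a_{ji}^* )$. A Rickart $*$-ring is a $*$-ring in which the right annihilator of each element is generated by a projection ($p=p^2=p^*$); a Rickart ring is one in which left and right annihilators of each element are generated by idempotents. *)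

theory Defs
  imports Main
begin

text \<open>Elements of T are represented by formal K-algebra expressions in the generators
  u, v, c, f, c*, f*, modulo the smallest congruence containing the unital
  K-algebra axioms and the Leavitt path algebra relations of E_T
  (together with the fact that the identity is u + v).\<close>

datatype gen = U | V | C | F | Cs | Fs

datatype 'k lexp =
    Sc 'k
  | G gen
  | Plus "'k lexp" "'k lexp"
  | Neg "'k lexp"
  | Times "'k lexp" "'k lexp"

inductive lpa_eq :: "'k::field lexp \<Rightarrow> 'k lexp \<Rightarrow> bool" (infix "\<approx>" 50) where
  refl: "a \<approx> a"
| sym: "a \<approx> b \<Longrightarrow> b \<approx> a"
| trans: "a \<approx> b \<Longrightarrow> b \<approx> c \<Longrightarrow> a \<approx> c"
| plus_cong: "a \<approx> a' \<Longrightarrow> b \<approx> b' \<Longrightarrow> Plus a b \<approx> Plus a' b'"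
| neg_cong: "a \<approx> a' \<Longrightarrow> Neg a \<approx> Neg a'"
| times_cong: "a \<approx> a' \<Longrightarrow> b \<approx> b' \<Longrightarrow> Times a b \<approx> Times a' b'"
| plus_assoc: "Plus (Plus a b) c \<approx> Plus a (Plus b c)"
| plus_comm: "Plus a b \<approx> Plus b a"
| plus_zero: "Plus a (Sc 0) \<approx> a"
| plus_neg: "Plus a (Neg a) \<approx> Sc 0"
| times_assoc: "Times (Times a b) c \<approx> Times a (Times b c)"
| times_one_l: "Times (Sc 1) a \<approx> a"
| times_one_r: "Times a (Sc 1) \<approx> a"
| distrib_l: "Times a (Plus b c) \<approx> Plus (Times a b) (Times a c)"
| distrib_r: "Times (Plus a b) c \<approx> Plus (Times a c) (Times b c)"
| sc_plus: "Sc (k + l) \<approx> Plus (Sc k) (Sc l)"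
| sc_times: "Sc (k * l) \<approx> Times (Sc k) (Sc l)"
| sc_central: "Times (Sc k) a \<approx> Times a (Sc k)"
| uu: "Times (G U) (G U) \<approx> G U"
| vv: "Times (G V) (G V) \<approx> G V"
| uv: "Times (G U) (G V) \<approx> Sc 0"
| vu: "Times (G V) (G U) \<approx> Sc 0"
| vc: "Times (G V) (G C) \<approx> G C"
| cv: "Times (G C) (G V) \<approx> G C"
| vf: "Times (G V) (G F) \<approx> G F"
| fu: "Times (G F) (G U) \<approx> G F"
| csv: "Times (G Cs) (G V) \<approx> G Cs"
| vcs: "Times (G V) (G Cs) \<approx> G Cs"
| ufs: "Times (G U) (G Fs) \<approx> G Fs"
| fsv: "Times (G Fs) (G V) \<approx> G Fs"
| csc: "Times (G Cs) (G C) \<approx> G V"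
| fsf: "Times (G Fs) (G F) \<approx> G U"
| csf: "Times (G Cs) (G F) \<approx> Sc 0"
| fsc: "Times (G Fs) (G C) \<approx> Sc 0"
| ck: "G V \<approx> Plus (Times (G C) (G Cs)) (Times (G F) (G Fs))"
| unit: "Sc 1 \<approx> Plus (G U) (G V)"

fun lstar :: "('k \<Rightarrow> 'k) \<Rightarrow> 'k lexp \<Rightarrow> 'k lexp" where
  "lstar \<sigma> (Sc k) = Sc (\<sigma> k)"
| "lstar \<sigma> (G U) = G U"
| "lstar \<sigma> (G V) = G V"
| "lstar \<sigma> (G C) = G Cs"
| "lstar \<sigma> (G Cs) = G C"
| "lstar \<sigma> (G F) = G Fs"
| "lstar \<sigma> (G Fs) = G F"
| "lstar \<sigma> (Plus a b) = Plus (lstar \<sigma> a) (lstar \<sigma> b)"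
| "lstar \<sigma> (Neg a) = Neg (lstar \<sigma> a)"
| "lstar \<sigma> (Times a b) = Times (lstar \<sigma> b) (lstar \<sigma> a)"

definition field_involution :: "('k::field \<Rightarrow> 'k) \<Rightarrow> bool" where
  "field_involution \<sigma> \<longleftrightarrow>
     (\<forall>a b. \<sigma> (a + b) = \<sigma> a + \<sigma> b) \<and> (\<forall>a b. \<sigma> (a * b) = \<sigma> a * \<sigma> b) \<and> (\<forall>a. \<sigma> (\<sigma> a) = a)"

definition lpa_invertible :: "'k::field lexp \<Rightarrow> bool" where
  "lpa_invertible x \<longleftrightarrow> (\<exists>y. Times x y \<approx> Sc 1 \<and> Times y x \<approx> Sc 1)"

definition toeplitz_star_symmetric :: "('k::field \<Rightarrow> 'k) \<Rightarrow> bool" where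
  "toeplitz_star_symmetric \<sigma> \<longleftrightarrow>
     (\<forall>x::'k lexp. lpa_invertible (Plus (Sc 1) (Times x (lstar \<sigma> x))))"

text \<open>n x n matrices over T: only entries with indices < n matter.\<close>
type_synonym 'k lmat = "nat \<Rightarrow> nat \<Rightarrow> 'k lexp"

definition lsum :: "'k::field lexp list \<Rightarrow> 'k lexp" where
  "lsum xs = foldr Plus xs (Sc 0)"

definition mat_eq :: "nat \<Rightarrow> 'k::field lmat \<Rightarrow> 'k lmat \<Rightarrow> bool" where
  "mat_eq n A B \<longleftrightarrow> (\<forall>i<n. \<forall>j<n. A i j \<approx> B i j)"

definition mat_mul :: "nat \<Rightarrow> 'k::field lmat \<Rightarrow> 'k lmat \<Rightarrow> 'k lmat" where
  "mat_mul n A B = (\<lambda>i j. lsum (map (\<lambda>k. Times (A i k) (B k j)) [0..<n]))"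

definition mat_zero :: "'k::field lmat" where
  "mat_zero = (\<lambda>i j. Sc 0)"

definition mat_star :: "('k \<Rightarrow> 'k) \<Rightarrow> 'k lmat \<Rightarrow> 'k lmat" where
  "mat_star \<sigma> A = (\<lambda>i j. lstar \<sigma> (A j i))"

definition mat_projection :: "('k::field \<Rightarrow> 'k) \<Rightarrow> nat \<Rightarrow> 'k lmat \<Rightarrow> bool" where
  "mat_projection \<sigma> n P \<longleftrightarrow> mat_eq n (mat_mul n P P) P \<and> mat_eq n (mat_star \<sigma> P) P"

definition mat_rickart_star :: "('k::field \<Rightarrow> 'k) \<Rightarrow> nat \<Rightarrow> bool" where
  "mat_rickart_star \<sigma> n \<longleftrightarrow>
     (\<forall>X::'k lmat. \<exists>P. mat_projection \<sigma> n P \<and>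
        (\<forall>Y. mat_eq n (mat_mul n X Y) mat_zero \<longleftrightarrow> (\<exists>Z. mat_eq n Y (mat_mul n P Z))))"

end

theory Submission
  imports Defs
begin

datatype 'k m2 = M2 'k 'k 'k 'k

instantiation m2 :: (comm_ring_1) ring_1
begin
definition "0 = M2 0 0 0 0"
definition "1 = M2 1 0 0 1"
fun plus_m2 where "plus_m2 (M2 a b c d) (M2 a' b' c' d') = M2 (a+a') (b+b') (c+c') (d+d')"
fun minus_m2 where "minus_m2 (M2 a b c d) (M2 a' b' c' d') = M2 (a-a') (b-b') (c-c') (d-d')"
fun uminus_m2 where "uminus_m2 (M2 a b c d) = M2 (-a) (-b) (-c) (-d)"
fun times_m2 where "times_m2 (M2 a b c d) (M2 a' b' c' d') =
  M2 (a*a'+b*c') (a*b'+b*d') (c*a'+d*c') (c*b'+d*d')"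
instance
proof
  fix x y z :: "'a m2"
  show "x * y * z = x * (y * z)" by (cases x; cases y; cases z) (simp add: algebra_simps)
  show "1 * x = x" by (cases x) (simp add: one_m2_def)
  show "x * 1 = x" by (cases x) (simp add: one_m2_def)
  show "(x + y) * z = x * z + y * z" by (cases x; cases y; cases z) (simp add: algebra_simps)
  show "x * (y + z) = x * y + x * z" by (cases x; cases y; cases z) (simp add: algebra_simps)
  show "x + y + z = x + (y + z)" by (cases x; cases y; cases z) (simp add: algebra_simps)
  show "x + y = y + x" by (cases x; cases y) (simp add: algebra_simps)
  show "0 + x = x" by (cases x) (simp add: zero_m2_def)
  show "- x + x = 0" by (cases x) (simp add: zero_m2_def)
  show "x - y = x + - y" by (cases x; cases y) simp
  show "(0::'a m2) \<noteq> 1" by (simp add: zero_m2_def one_m2_def)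
qed
end

definition scal :: "'k::comm_ring_1 \<Rightarrow> 'k m2" where "scal k = M2 k 0 0 k"

definition Mc :: "'k::comm_ring_1 m2" where "Mc = M2 0 (-1) 1 (-3)"
definition Mi :: "'k::comm_ring_1 m2" where "Mi = M2 (-3) 1 (-1) 0"

fun gphi :: "gen \<Rightarrow> 'k::comm_ring_1 m2" where
  "gphi U = 0" | "gphi V = 1" | "gphi C = Mc" | "gphi Cs = Mi" | "gphi F = 0" | "gphi Fs = 0"

fun phi :: "'k::field lexp \<Rightarrow> 'k m2" where
  "phi (Sc k) = scal k"
| "phi (G g) = gphi g"
| "phi (Plus a b) = phi a + phi b"
| "phi (Neg a) = - phi a"
| "phi (Times a b) = phi a * phi b"

lemma McMi: "Mc * Mi = 1" "Mi * Mc = 1"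
  by (simp_all add: Mc_def Mi_def one_m2_def)

lemma scal_central: "scal k * a = a * scal k"
  by (cases a) (simp add: scal_def algebra_simps)

lemma m2_zero_mult[simp]: "0 * (x::'k::comm_ring_1 m2) = 0" by simp

lemma phi_resp: "a \<approx> b \<Longrightarrow> phi a = phi b"
proof (induction rule: lpa_eq.induct)
  case (times_assoc a b c) then show ?case by (simp add: mult.assoc)
next
  case (distrib_l a b c) then show ?case by (simp add: distrib_left)
next
  case (distrib_r a b c) then show ?case by (simp add: distrib_right)
next
  case (sc_plus k l) then show ?case by (simp add: scal_def)
next
  case (sc_times k l) then show ?case by (simp add: scal_def)
next
  case (sc_central k a) then show ?case by (simp add: scal_central)
next
  case (times_one_l a) then show ?case by (simp add: scal_def flip: one_m2_def)
next
  case (times_one_r a) then show ?case by (simp add: scal_def flip: one_m2_def)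
next
  case (plus_zero a) then show ?case by (simp add: scal_def flip: zero_m2_def)
next
  case (plus_neg a) then show ?case by (simp add: scal_def flip: zero_m2_def)
next
  case plus_assoc then show ?case by (simp add: add.assoc)
next
  case plus_comm then show ?case by (simp add: add.commute)
next
  case ck then show ?case by (simp add: McMi)
next
  case unit then show ?case by (simp add: scal_def flip: one_m2_def)
qed (simp_all add: McMi scal_def flip: zero_m2_def)

lemma inv_facts:
  assumes "field_involution \<sigma>"
  shows "\<sigma> 0 = 0" "\<sigma> 1 = 1" "\<sigma> (a+b) = \<sigma> a + \<sigma> b" "\<sigma> (a*b) = \<sigma> a * \<sigma> b" "\<sigma> (\<sigma> a) = a"
proof -
  have add: "\<And>a b. \<sigma> (a+b) = \<sigma> a + \<sigma> b" and mul: "\<And>a b. \<sigma> (a*b) = \<sigma> a * \<sigma> b"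
    and ii: "\<And>a. \<sigma> (\<sigma> a) = a" using assms by (auto simp: field_involution_def)
  have z: "\<sigma> 0 = 0" using add[of 0 0] by (metis add.right_neutral add_left_cancel)
  have "\<sigma> 1 = \<sigma> 1 * \<sigma> 1" using mul[of 1 1] by simp
  moreover have "\<sigma> 1 \<noteq> 0" using ii[of 1] z by auto
  ultimately have "\<sigma> 1 = 1" by (metis mult_cancel_left1)
  then show "\<sigma> 0 = 0" "\<sigma> 1 = 1" "\<sigma> (a+b) = \<sigma> a + \<sigma> b" "\<sigma> (a*b) = \<sigma> a * \<sigma> b" "\<sigma> (\<sigma> a) = a"
    using z add mul ii by auto
qed

definition psi where "psi \<sigma> a = phi (lstar \<sigma> a)"

lemma psi_resp:
  assumes inv: "field_involution \<sigma>"
  shows "a \<approx> b \<Longrightarrow> psi \<sigma> a = psi \<sigma> b"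
  unfolding psi_def
proof (induction rule: lpa_eq.induct)
  case (times_assoc a b c) then show ?case by (simp add: mult.assoc)
next
  case (distrib_l a b c) then show ?case by (simp add: distrib_right)
next
  case (distrib_r a b c) then show ?case by (simp add: distrib_left)
next
  case (sc_plus k l) then show ?case by (simp add: scal_def inv_facts[OF inv])
next
  case (sc_times k l) then show ?case by (simp add: scal_def inv_facts[OF inv] mult.commute)
next
  case (sc_central k a) then show ?case by (simp add: scal_central)
next
  case (times_one_l a) then show ?case by (simp add: scal_def inv_facts[OF inv] flip: one_m2_def)
next
  case (times_one_r a) then show ?case by (simp add: scal_def inv_facts[OF inv] flip: one_m2_def)
next
  case (plus_zero a) then show ?case by (simp add: scal_def inv_facts[OF inv] flip: zero_m2_def)
next
  case (plus_neg a) then show ?case by (simp add: scal_def inv_facts[OF inv] flip: zero_m2_def)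
next
  case plus_assoc then show ?case by (simp add: add.assoc)
next
  case plus_comm then show ?case by (simp add: add.commute)
next
  case ck then show ?case by (simp add: McMi)
next
  case unit then show ?case by (simp add: scal_def inv_facts[OF inv] flip: one_m2_def)
qed (simp_all add: McMi scal_def inv_facts[OF inv] flip: zero_m2_def)

lemma phi_lsum: "phi (lsum xs) = sum_list (map phi xs)"
  by (induction xs) (simp_all add: lsum_def scal_def zero_m2_def)

lemma phi_lsum_upt: "phi (lsum (map f [0..<n])) = (\<Sum>k<n. phi (f k))"
  by (simp add: phi_lsum sum_set_upt_conv_sum_list_nat[symmetric] atLeast0LessThan comp_def)

lemma psi_simps:
  assumes inv: "field_involution \<sigma>"
  shows "psi \<sigma> (Plus a b) = psi \<sigma> a + psi \<sigma> b" "psi \<sigma> (Times a b) = psi \<sigma> b * psi \<sigma> a"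
    "psi \<sigma> (Sc 0) = 0" "psi \<sigma> (Sc 1) = 1" "psi \<sigma> (Neg a) = - psi \<sigma> a"
  by (simp_all add: psi_def scal_def inv_facts[OF inv] zero_m2_def one_m2_def)

lemma psi_lsum0:
  assumes inv: "field_involution \<sigma>"
  shows "psi \<sigma> (lsum xs) = sum_list (map (psi \<sigma>) xs)"
  by (induction xs) (simp_all add: lsum_def psi_def scal_def inv_facts[OF inv] zero_m2_def)

lemma psi_lsum_upt:
  assumes inv: "field_involution \<sigma>"
  shows "psi \<sigma> (lsum (map f [0..<n])) = (\<Sum>k<n. psi \<sigma> (f k))"
  by (simp add: psi_lsum0[OF inv] sum_set_upt_conv_sum_list_nat[symmetric] atLeast0LessThan comp_def)

lemma sum_two:
  assumes "n > (1::nat)" "\<And>k. k \<ge> 2 \<Longrightarrow> g k = (0::'a::comm_monoid_add)"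
  shows "(\<Sum>k<n. g k) = g 0 + g 1"
proof -
  have "(\<Sum>k<n. g k) = (\<Sum>k\<in>{0,1}. g k)"
    by (rule sum.mono_neutral_right) (use assms in auto)
  then show ?thesis by simp
qed

definition xx :: "'k::field lexp" where "xx = Plus (Sc 1) (G C)"

lemma key:
  assumes inv: "field_involution \<sigma>"
  shows "1 + phi xx * psi \<sigma> xx = 0" "1 + psi \<sigma> xx * phi xx = 0"
  by (simp_all add: xx_def psi_def scal_def inv_facts[OF inv] Mc_def Mi_def one_m2_def zero_m2_def)

lemma part1:
  assumes inv: "field_involution \<sigma>"
  shows "\<not> toeplitz_star_symmetric \<sigma>"
proof
  assume "toeplitz_star_symmetric \<sigma>"
  then obtain y where "Times (Plus (Sc 1) (Times xx (lstar \<sigma> xx))) y \<approx> Sc 1"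
    unfolding toeplitz_star_symmetric_def lpa_invertible_def by blast
  from phi_resp[OF this] have "(1 + phi xx * psi \<sigma> xx) * phi y = 1"
    by (simp add: psi_def scal_def flip: one_m2_def)
  then show False using key[OF inv] by simp
qed

declare lpa_eq.trans[trans]

lemma cancel_zero:
  assumes h: "Plus z z \<approx> z"
  shows "z \<approx> Sc 0"
proof -
  have "Sc 0 \<approx> Plus z (Neg z)" by (rule lpa_eq.sym, rule lpa_eq.plus_neg)
  also have "\<dots> \<approx> Plus (Plus z z) (Neg z)"
    by (rule lpa_eq.plus_cong, rule lpa_eq.sym, rule h, rule lpa_eq.refl)
  also have "\<dots> \<approx> Plus z (Plus z (Neg z))" by (rule lpa_eq.plus_assoc)
  also have "\<dots> \<approx> Plus z (Sc 0)" by (rule lpa_eq.plus_cong, rule lpa_eq.refl, rule lpa_eq.plus_neg)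
  also have "\<dots> \<approx> z" by (rule lpa_eq.plus_zero)
  finally show ?thesis by (rule lpa_eq.sym)
qed

lemma times_zero_l: "Times (Sc 0) a \<approx> Sc 0"
proof (rule cancel_zero)
  have s: "Plus (Sc 0) (Sc 0) \<approx> (Sc 0 :: 'a lexp)"
    using lpa_eq.sc_plus[of "0::'a" 0] by (simp add: lpa_eq.sym)
  have "Plus (Times (Sc 0) a) (Times (Sc 0) a) \<approx> Times (Plus (Sc 0) (Sc 0)) a"
    by (rule lpa_eq.sym, rule lpa_eq.distrib_r)
  also have "\<dots> \<approx> Times (Sc 0) a" by (rule lpa_eq.times_cong, rule s, rule lpa_eq.refl)
  finally show "Plus (Times (Sc 0) a) (Times (Sc 0) a) \<approx> Times (Sc 0) a" .
qed

lemma times_zero_r: "Times a (Sc 0) \<approx> Sc 0"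
  by (rule lpa_eq.trans, rule lpa_eq.sym, rule lpa_eq.sc_central, rule times_zero_l)

lemma plus_zero_l: "Plus (Sc 0) a \<approx> a"
  by (rule lpa_eq.trans, rule lpa_eq.plus_comm, rule lpa_eq.plus_zero)

lemma plus00: "Plus (Sc 0) (Sc 0) \<approx> Sc 0" by (rule lpa_eq.plus_zero)

lemma lsum_zero: "(\<forall>x\<in>set xs. x \<approx> Sc 0) \<Longrightarrow> lsum xs \<approx> Sc 0"
proof (induction xs)
  case Nil then show ?case by (simp add: lsum_def lpa_eq.refl)
next
  case (Cons x xs)
  then have "Plus x (lsum xs) \<approx> Plus (Sc 0) (Sc 0)" by (intro lpa_eq.plus_cong) auto
  then show ?case by (simp add: lsum_def) (rule lpa_eq.trans, assumption, rule plus00)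
qed

lemma lsum_two:
  assumes "n > (1::nat)" "\<And>k. k \<ge> 2 \<Longrightarrow> f k \<approx> Sc 0"
  shows "lsum (map f [0..<n]) \<approx> Plus (f 0) (f 1)"
proof -
  have e: "[0..<n] = 0 # 1 # [2..<n]" using assms(1)
    by (metis One_nat_def Suc_1 less_2_cases_iff not_less_eq upt_conv_Cons zero_less_iff_neq_zero
        less_imp_le_nat less_trans_Suc)
  have r: "lsum (map f [2..<n]) \<approx> Sc 0" by (rule lsum_zero) (use assms(2) in auto)
  have "lsum (map f [0..<n]) = Plus (f 0) (Plus (f 1) (lsum (map f [2..<n])))"
    by (simp add: e lsum_def)
  also have "\<dots> \<approx> Plus (f 0) (Plus (f 1) (Sc 0))"
    by (intro lpa_eq.plus_cong lpa_eq.refl r)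
  also have "\<dots> \<approx> Plus (f 0) (f 1)" by (intro lpa_eq.plus_cong lpa_eq.refl lpa_eq.plus_zero)
  finally show ?thesis .
qed

definition XX :: "'k::field lmat" where
  "XX = (\<lambda>i j. if i = 0 \<and> j = 0 then Sc 1 else if i = 0 \<and> j = 1 then xx else Sc 0)"
definition WW :: "'k::field lmat" where
  "WW = (\<lambda>i j. if i = 0 \<and> j = 1 then Neg xx else if i = 1 \<and> j = 1 then Sc 1 else Sc 0)"

lemma XW_zero:
  assumes "n > (1::nat)"
  shows "mat_eq n (mat_mul n XX WW) (mat_zero :: 'k::field lmat)"
  unfolding mat_eq_def mat_zero_def mat_mul_def
proof (intro allI impI)
  fix i j assume "i < n" "j < n"
  have "lsum (map (\<lambda>k. Times ((XX::'k lmat) i k) (WW k j)) [0..<n]) \<approx>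
        Plus (Times (XX i 0) (WW 0 j)) (Times (XX i 1) (WW 1 j))"
    by (rule lsum_two[OF assms]) (simp add: XX_def times_zero_l)
  also have "\<dots> \<approx> (Sc 0 :: 'k lexp)"
  proof (cases "i = 0")
    case False
    then show ?thesis
      by (simp add: XX_def) (rule lpa_eq.trans, rule lpa_eq.plus_cong, rule times_zero_l, rule times_zero_l, rule plus00)
  next
    case True
    show ?thesis
    proof (cases "j = 1")
      case False
      then show ?thesis using True
        by (simp add: XX_def WW_def) (rule lpa_eq.trans, rule lpa_eq.plus_cong, rule times_zero_r, rule times_zero_r, rule plus00)
    next
      case j: True
      have "Plus (Times (Sc 1) (Neg xx)) (Times xx (Sc 1)) \<approx> Plus (Neg (xx::'k lexp)) xx"
        by (rule lpa_eq.plus_cong, rule lpa_eq.times_one_l, rule lpa_eq.times_one_r)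
      also have "\<dots> \<approx> Sc 0" by (rule lpa_eq.trans, rule lpa_eq.plus_comm, rule lpa_eq.plus_neg)
      finally show ?thesis using True j by (simp add: XX_def WW_def)
    qed
  qed
  finally show "lsum (map (\<lambda>k. Times ((XX::'k lmat) i k) (WW k j)) [0..<n]) \<approx> Sc 0" .
qed

lemma scal01[simp]: "scal 0 = 0" "scal 1 = 1"
  by (simp_all add: scal_def zero_m2_def one_m2_def)

lemma phi_Sc01[simp]: "phi (Sc 0) = 0" "phi (Sc 1) = 1"
  by (simp_all add: scal_def zero_m2_def one_m2_def)

lemma part2:
  assumes inv: "field_involution \<sigma>" and n: "n > (1::nat)"
  shows "\<not> mat_rickart_star \<sigma> n"
proof
  assume "mat_rickart_star \<sigma> n"
  then have "\<exists>P. mat_projection \<sigma> n P \<and>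
        (\<forall>Y. mat_eq n (mat_mul n XX Y) mat_zero \<longleftrightarrow> (\<exists>Z. mat_eq n Y (mat_mul n P Z)))"
    unfolding mat_rickart_star_def by (rule spec)
  then obtain P where proj: "mat_projection \<sigma> n P" and
    ann': "\<forall>Y. mat_eq n (mat_mul n XX Y) mat_zero \<longleftrightarrow> (\<exists>Z. mat_eq n Y (mat_mul n P Z))"
    by (elim exE conjE)
  note ann = ann'[rule_format]
  have PP: "mat_eq n (mat_mul n P P) P" and PS: "mat_eq n (mat_star \<sigma> P) P"
    using proj by (auto simp: mat_projection_def)
  have "mat_eq n P (mat_mul n P P)" unfolding mat_eq_def
  proof (intro allI impI)
    fix i j assume "i < n" "j < n"
    have "mat_mul n P P i j \<approx> P i j" using PP \<open>i < n\<close> \<open>j < n\<close> by (simp add: mat_eq_def)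
    then show "P i j \<approx> mat_mul n P P i j" by (rule lpa_eq.sym)
  qed
  then have "\<exists>Z. mat_eq n P (mat_mul n P Z)" by blast
  then have XP: "mat_eq n (mat_mul n XX P) mat_zero" by (rule iffD2[OF ann[of P]])
  have "\<exists>Z. mat_eq n WW (mat_mul n P Z)" using XW_zero[OF n] by (rule iffD1[OF ann[of WW]])
  then obtain Z where WZ: "mat_eq n WW (mat_mul n P Z)" by blast
  have n0: "0 < n" "1 < n" using n by auto
  let ?p = "\<lambda>i j. phi (P i j)"
  have PPs: "(\<Sum>k<n. ?p i k * ?p k j) = ?p i j" if "i < n" "j < n" for i j
  proof -
    from PP that have "lsum (map (\<lambda>k. Times (P i k) (P k j)) [0..<n]) \<approx> P i j"
      by (auto simp: mat_eq_def mat_mul_def)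
    from phi_resp[OF this] show ?thesis by (simp add: phi_lsum_upt)
  qed
  have WZs: "phi (WW i j) = (\<Sum>k<n. ?p i k * phi (Z k j))" if "i < n" "j < n" for i j
  proof -
    from WZ that have "WW i j \<approx> lsum (map (\<lambda>k. Times (P i k) (Z k j)) [0..<n])"
      by (auto simp: mat_eq_def mat_mul_def)
    from phi_resp[OF this] show ?thesis by (simp add: phi_lsum_upt)
  qed
  have "(\<Sum>k<n. ?p 1 k * phi (WW k 1)) = (\<Sum>k<n. ?p 1 k * (\<Sum>l<n. ?p k l * phi (Z l 1)))"
    using WZs n0 by (intro sum.cong) auto
  also have "\<dots> = (\<Sum>k<n. \<Sum>l<n. ?p 1 k * (?p k l * phi (Z l 1)))"
    by (simp only: sum_distrib_left)
  also have "\<dots> = (\<Sum>l<n. \<Sum>k<n. ?p 1 k * (?p k l * phi (Z l 1)))"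
    by (rule sum.swap)
  also have "\<dots> = (\<Sum>l<n. (\<Sum>k<n. ?p 1 k * ?p k l) * phi (Z l 1))"
    by (simp only: sum_distrib_right mult.assoc)
  also have "\<dots> = (\<Sum>l<n. ?p 1 l * phi (Z l 1))"
    using PPs n0 by (intro sum.cong) auto
  also have "\<dots> = phi (WW 1 1)" using WZs n0 by simp
  also have "\<dots> = 1" by (simp add: WW_def scal_def one_m2_def)
  finally have S1: "(\<Sum>k<n. ?p 1 k * phi (WW k 1)) = 1" .
  have S2: "(\<Sum>k<n. ?p 1 k * phi (WW k 1)) = - ?p 1 0 * phi xx + ?p 1 1"
  proof -
    have "(\<Sum>k<n. ?p 1 k * phi (WW k 1)) = ?p 1 0 * phi (WW 0 1) + ?p 1 1 * phi (WW 1 1)"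
      by (rule sum_two[OF n]) (simp add: WW_def)
    then show ?thesis by (simp add: WW_def)
  qed
  have "psi \<sigma> (lsum (map (\<lambda>k. Times (XX 0 k) (P k 1)) [0..<n])) = psi \<sigma> (Sc 0)"
  proof (rule psi_resp[OF inv])
    show "lsum (map (\<lambda>k. Times (XX 0 k) (P k 1)) [0..<n]) \<approx> Sc 0"
      using XP n0 by (simp add: mat_eq_def mat_mul_def mat_zero_def)
  qed
  then have "(\<Sum>k<n. psi \<sigma> (P k 1) * psi \<sigma> (XX 0 k)) = 0"
    by (simp add: psi_lsum_upt[OF inv] psi_simps[OF inv])
  moreover have "(\<Sum>k<n. psi \<sigma> (P k 1) * psi \<sigma> (XX 0 k)) = psi \<sigma> (P 0 1) + psi \<sigma> (P 1 1) * psi \<sigma> xx"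
  proof -
    have "(\<Sum>k<n. psi \<sigma> (P k 1) * psi \<sigma> (XX 0 k)) = psi \<sigma> (P 0 1) * psi \<sigma> (XX 0 0) + psi \<sigma> (P 1 1) * psi \<sigma> (XX 0 1)"
      by (rule sum_two[OF n]) (simp add: XX_def psi_simps[OF inv])
    then show ?thesis by (simp add: XX_def psi_simps[OF inv])
  qed
  ultimately have A: "psi \<sigma> (P 0 1) = - (psi \<sigma> (P 1 1) * psi \<sigma> xx)"
    by (simp add: eq_neg_iff_add_eq_0)
  have B: "psi \<sigma> (P 0 1) = ?p 1 0" "psi \<sigma> (P 1 1) = ?p 1 1"
  proof -
    have "lstar \<sigma> (P 0 1) \<approx> P 1 0" "lstar \<sigma> (P 1 1) \<approx> P 1 1"
      using PS n0 by (simp_all add: mat_eq_def mat_star_def)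
    then show "psi \<sigma> (P 0 1) = ?p 1 0" "psi \<sigma> (P 1 1) = ?p 1 1"
      by (simp_all add: psi_def phi_resp)
  qed
  have e: "?p 1 0 = - (?p 1 1 * psi \<sigma> xx)" using A B by simp
  have "1 = ?p 1 1 - ?p 1 0 * phi xx" using S1 S2 by simp
  also have "\<dots> = ?p 1 1 * (psi \<sigma> xx * phi xx) + ?p 1 1" unfolding e by (simp add: algebra_simps)
  also have "\<dots> = ?p 1 1 * (1 + psi \<sigma> xx * phi xx)" by (simp add: algebra_simps)
  also have "\<dots> = 0" using key[OF inv] by simp
  finally show False by simp
qed

theorem mainTheorem19:
  fixes \<sigma> :: "'k::field \<Rightarrow> 'k"
  assumes "field_involution \<sigma>"
  shows "\<not> toeplitz_star_symmetric \<sigma> \<and> (\<forall>n::nat. n > 1 \<longrightarrow> \<not> mat_rickart_star \<sigma> n)"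
  using part1[OF assms] part2[OF assms] by blast

end
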